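(* For all $d,m\in\mathbb{N}$ there exist $c'=c'(d,m)$ and $d'=d'(d,m)$ such that for every $n\ge m$, every polynomial map $p:\mathbb{R}^n\to\mathbb{R}^m$ with components of degree at most $d$, and every $\Lambda=(\Lambda_1,\dots,\Lambda_m)\in\mathbb{R}^m_+$, the set $C^\Lambda(p)$ is closed and semialgebraic with diagram $D(C^\Lambda(p))=(n,c',d')$.
   Context: $C^\Lambda(p)=\{x\in\mathbb{R}^n:\sigma_i(D_xp)\le\Lambda_i\ \forall i=1,\dots,m\}$, where $\sigma_i(L)=\lambda_i(LL^\top)^{1/2}$ are the singular values (eigenvalues in decreasing order). A set $S\subset\mathbb{R}^n$ is semialgebraic if $S=\bigcup_{i=1}^a\bigcap_{j=1}^{b_i}\{x:\mathrm{sign}(p_{ij}(x))=\sigma_{ij}\}$ for polynomials $p_{ij}$ and $\sigma_{ij}\in\{0,1,-1\}$; "$D(S)=(n,c',d')$" means $S$ admits such a representation with $a\cdot\max_ib_i\le c'$ and $\max_{i,j}\deg p_{ij}\le d'$. *)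

theory Defs
  imports "HOL-Analysis.Analysis" "Jordan_Normal_Form.Char_Poly"
begin

text \<open>Euclidean space R^n rendered as functions nat => real that vanish from index n on.
  The topology on nat => real is the product topology (HOL-Analysis), whose restriction
  to this (closed) subspace is the Euclidean topology of R^n.\<close>
definition Rn :: "nat \<Rightarrow> (nat \<Rightarrow> real) set" where
  "Rn n = {x. \<forall>i\<ge>n. x i = 0}"

definition poly_fun :: "nat \<Rightarrow> nat \<Rightarrow> ((nat \<Rightarrow> real) \<Rightarrow> real) \<Rightarrow> bool" where
  "poly_fun n d f \<longleftrightarrow>
     (\<exists>(A :: (nat \<Rightarrow> nat) set) (c :: (nat \<Rightarrow> nat) \<Rightarrow> real).
        finite A \<and> (\<forall>\<alpha>\<in>A. (\<forall>i\<ge>n. \<alpha> i = 0) \<and> (\<Sum>i<n. \<alpha> i) \<le> d) \<and>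
        (\<forall>x. f x = (\<Sum>\<alpha>\<in>A. c \<alpha> * (\<Prod>i<n. x i ^ \<alpha> i))))"

definition poly_map :: "nat \<Rightarrow> nat \<Rightarrow> nat \<Rightarrow> (nat \<Rightarrow> (nat \<Rightarrow> real) \<Rightarrow> real) \<Rightarrow> bool" where
  "poly_map n m d p \<longleftrightarrow> (\<forall>j<m. poly_fun n d (p j))"

definition jacobian :: "nat \<Rightarrow> nat \<Rightarrow> (nat \<Rightarrow> (nat \<Rightarrow> real) \<Rightarrow> real) \<Rightarrow> (nat \<Rightarrow> real) \<Rightarrow> real mat" where
  "jacobian n m p x = mat m n (\<lambda>(j, i). deriv (\<lambda>t. p j (x(i := t))) (x i))"

text \<open>Eigenvalues (with multiplicity) of a square real matrix whose characteristic polynomial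
  splits over the reals, listed in decreasing order.\<close>
definition eigenvalues_desc :: "real mat \<Rightarrow> real list" where
  "eigenvalues_desc M = (THE ls. length ls = dim_row M \<and> sorted_wrt (\<ge>) ls \<and>
      char_poly M = prod_list (map (\<lambda>l. [:- l, 1:]) ls))"

text \<open>Singular values sigma_i(L) = lambda_i(L L^T)^(1/2), i = 0, ..., (rows L) - 1 (0-based).\<close>
definition singular_value :: "real mat \<Rightarrow> nat \<Rightarrow> real" where
  "singular_value L i = sqrt (eigenvalues_desc (L * transpose_mat L) ! i)"

definition C_Lambda :: "nat \<Rightarrow> nat \<Rightarrow> (nat \<Rightarrow> real) \<Rightarrow> (nat \<Rightarrow> (nat \<Rightarrow> real) \<Rightarrow> real) \<Rightarrow> (nat \<Rightarrow> real) set" where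
  "C_Lambda n m \<Lambda> p = {x \<in> Rn n. \<forall>i<m. singular_value (jacobian n m p x) i \<le> \<Lambda> i}"

definition semialg_diagram :: "nat \<Rightarrow> nat \<Rightarrow> nat \<Rightarrow> (nat \<Rightarrow> real) set \<Rightarrow> bool" where
  "semialg_diagram n c' d' S \<longleftrightarrow>
     (\<exists>(a :: nat) (b :: nat \<Rightarrow> nat) (q :: nat \<Rightarrow> nat \<Rightarrow> (nat \<Rightarrow> real) \<Rightarrow> real)
        (\<sigma> :: nat \<Rightarrow> nat \<Rightarrow> real).
        (\<forall>i<a. \<forall>j<b i. poly_fun n d' (q i j) \<and> \<sigma> i j \<in> {0, 1, -1}) \<and>
        a * Max (b ` {..<a}) \<le> c' \<and>
        S = (\<Union>i<a. {x \<in> Rn n. \<forall>j<b i. sgn (q i j x) = \<sigma> i j}))"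

end

theory Submission
  imports Defs
begin


definition mon :: "nat \<Rightarrow> (nat \<Rightarrow> nat) \<Rightarrow> (nat \<Rightarrow> real) \<Rightarrow> real" where
  "mon n \<alpha> x = (\<Prod>i<n. x i ^ \<alpha> i)"

lemma poly_fun_intro:
  fixes K :: "'k set" and \<alpha> :: "'k \<Rightarrow> nat \<Rightarrow> nat" and c :: "'k \<Rightarrow> real"
  assumes K: "finite K"
    and al: "\<And>k. k \<in> K \<Longrightarrow> (\<forall>i\<ge>n. \<alpha> k i = 0) \<and> (\<Sum>i<n. \<alpha> k i) \<le> d"
    and f: "\<And>x. f x = (\<Sum>k\<in>K. c k * mon n (\<alpha> k) x)"
  shows "poly_fun n d f"
  unfolding poly_fun_def
proof (intro exI conjI allI)
  show "finite (\<alpha> ` K)" using K by simp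
  show "\<forall>\<beta>\<in>\<alpha> ` K. (\<forall>i\<ge>n. \<beta> i = 0) \<and> (\<Sum>i<n. \<beta> i) \<le> d" using al by auto
  fix x
  have "f x = (\<Sum>k\<in>K. c k * mon n (\<alpha> k) x)" by (rule f)
  also have "\<dots> = (\<Sum>\<beta>\<in>\<alpha> ` K. (\<Sum>k\<in>{k\<in>K. \<alpha> k = \<beta>}. c k * mon n (\<alpha> k) x))"
    by (rule sum.image_gen[OF K])
  also have "\<dots> = (\<Sum>\<beta>\<in>\<alpha> ` K. (\<Sum>k\<in>{k\<in>K. \<alpha> k = \<beta>}. c k) * mon n \<beta> x)"
    by (rule sum.cong[OF refl]) (simp add: sum_distrib_right)
  finally show "f x = (\<Sum>\<beta>\<in>\<alpha> ` K. (\<Sum>k\<in>{k\<in>K. \<alpha> k = \<beta>}. c k) * (\<Prod>i<n. x i ^ \<beta> i))"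
    by (simp add: mon_def)
qed

lemma poly_funE:
  assumes "poly_fun n d f"
  obtains A c where "finite A" "\<And>\<alpha>. \<alpha> \<in> A \<Longrightarrow> (\<forall>i\<ge>n. \<alpha> i = 0) \<and> (\<Sum>i<n. \<alpha> i) \<le> d"
    "\<And>x. f x = (\<Sum>\<alpha>\<in>A. c \<alpha> * mon n \<alpha> x)"
  using assms unfolding poly_fun_def mon_def by blast

lemma poly_fun_mono_deg: "poly_fun n d1 f \<Longrightarrow> d1 \<le> d2 \<Longrightarrow> poly_fun n d2 f"
  unfolding poly_fun_def by (meson order_trans)

lemma poly_fun_const: "poly_fun n d (\<lambda>x. a)"
  by (rule poly_fun_intro[where K="{()}" and \<alpha>="\<lambda>_ _. 0" and c="\<lambda>_. a"]) (auto simp: mon_def)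

lemma poly_fun_var:
  assumes "i < n" "1 \<le> d"
  shows "poly_fun n d (\<lambda>x. x i)"
proof (rule poly_fun_intro[where K="{()}" and \<alpha>="\<lambda>_ j. if j = i then 1 else 0" and c="\<lambda>_. 1"])
  fix x :: "nat \<Rightarrow> real"
  have "(\<Prod>j<n. x j ^ (if j = i then 1 else 0)) = (\<Prod>j<n. if j = i then x j else 1)"
    by (rule prod.cong) auto
  also have "\<dots> = x i" using assms by (simp add: prod.delta)
  finally show "x i = (\<Sum>k\<in>{()}. 1 * mon n (\<lambda>j. if j = i then 1 else 0) x)" by (simp add: mon_def)
qed (use assms in auto)

lemma poly_fun_add:
  assumes "poly_fun n d f" "poly_fun n d g"
  shows "poly_fun n d (\<lambda>x. f x + g x)"
proof -
  obtain A c where A: "finite A" "\<And>\<alpha>. \<alpha> \<in> A \<Longrightarrow> (\<forall>i\<ge>n. \<alpha> i = 0) \<and> (\<Sum>i<n. \<alpha> i) \<le> d"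
    "\<And>x. f x = (\<Sum>\<alpha>\<in>A. c \<alpha> * mon n \<alpha> x)" using poly_funE[OF assms(1)] by blast
  obtain B c' where B: "finite B" "\<And>\<alpha>. \<alpha> \<in> B \<Longrightarrow> (\<forall>i\<ge>n. \<alpha> i = 0) \<and> (\<Sum>i<n. \<alpha> i) \<le> d"
    "\<And>x. g x = (\<Sum>\<alpha>\<in>B. c' \<alpha> * mon n \<alpha> x)" using poly_funE[OF assms(2)] by blast
  show ?thesis
  proof (rule poly_fun_intro[where K="A <+> B" and \<alpha>="case_sum id id" and c="case_sum c c'"])
    fix x
    show "f x + g x = (\<Sum>k\<in>A <+> B. case_sum c c' k * mon n (case_sum id id k) x)"
      using A(1) B(1) unfolding Plus_def A(3) B(3)
      by (subst sum.union_disjoint) (auto simp: sum.reindex)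
  qed (use A B in auto)
qed

lemma poly_fun_scale:
  assumes "poly_fun n d f"
  shows "poly_fun n d (\<lambda>x. a * f x)"
proof -
  obtain A c where A: "finite A" "\<And>\<alpha>. \<alpha> \<in> A \<Longrightarrow> (\<forall>i\<ge>n. \<alpha> i = 0) \<and> (\<Sum>i<n. \<alpha> i) \<le> d"
    "\<And>x. f x = (\<Sum>\<alpha>\<in>A. c \<alpha> * mon n \<alpha> x)" using poly_funE[OF assms(1)] by blast
  show ?thesis
    by (rule poly_fun_intro[where K=A and \<alpha>=id and c="\<lambda>\<alpha>. a * c \<alpha>"])
      (use A in \<open>auto simp: sum_distrib_left mult.assoc\<close>)
qed

lemma poly_fun_mult:
  assumes "poly_fun n d1 f" "poly_fun n d2 g"
  shows "poly_fun n (d1 + d2) (\<lambda>x. f x * g x)"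
proof -
  obtain A c where A: "finite A" "\<And>\<alpha>. \<alpha> \<in> A \<Longrightarrow> (\<forall>i\<ge>n. \<alpha> i = 0) \<and> (\<Sum>i<n. \<alpha> i) \<le> d1"
    "\<And>x. f x = (\<Sum>\<alpha>\<in>A. c \<alpha> * mon n \<alpha> x)" using poly_funE[OF assms(1)] by blast
  obtain B c' where B: "finite B" "\<And>\<alpha>. \<alpha> \<in> B \<Longrightarrow> (\<forall>i\<ge>n. \<alpha> i = 0) \<and> (\<Sum>i<n. \<alpha> i) \<le> d2"
    "\<And>x. g x = (\<Sum>\<alpha>\<in>B. c' \<alpha> * mon n \<alpha> x)" using poly_funE[OF assms(2)] by blast
  have mm: "mon n (\<lambda>i. a i + b i) x = mon n a x * mon n b x" for a b x
    by (simp add: mon_def power_add prod.distrib)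
  show ?thesis
  proof (rule poly_fun_intro[where K="A \<times> B" and \<alpha>="\<lambda>(a,b) i. a i + b i" and c="\<lambda>(a,b). c a * c' b"])
    fix x
    show "f x * g x = (\<Sum>k\<in>A \<times> B. (case k of (a, b) \<Rightarrow> c a * c' b) * mon n (case k of (a, b) \<Rightarrow> \<lambda>i. a i + b i) x)"
      unfolding A(3) B(3) sum_product sum.cartesian_product
      by (rule sum.cong[OF refl]) (auto simp: mm)
  next
    fix k assume "k \<in> A \<times> B"
    then obtain a b where k: "k = (a,b)" "a \<in> A" "b \<in> B" by auto
    show "(\<forall>i\<ge>n. (case k of (a, b) \<Rightarrow> \<lambda>i. a i + b i) i = 0) \<and> (\<Sum>i<n. (case k of (a, b) \<Rightarrow> \<lambda>i. a i + b i) i) \<le> d1 + d2"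
      using A(2)[OF k(2)] B(2)[OF k(3)] by (simp add: k sum.distrib)
  qed (use A B in auto)
qed

lemma poly_fun_uminus: "poly_fun n d f \<Longrightarrow> poly_fun n d (\<lambda>x. - f x)"
  using poly_fun_scale[of n d f "-1"] by simp

lemma poly_fun_diff: "poly_fun n d f \<Longrightarrow> poly_fun n d g \<Longrightarrow> poly_fun n d (\<lambda>x. f x - g x)"
  using poly_fun_add[of n d f "\<lambda>x. - g x"] poly_fun_uminus by simp

lemma poly_fun_sum:
  assumes "finite I" "\<And>i. i \<in> I \<Longrightarrow> poly_fun n d (f i)"
  shows "poly_fun n d (\<lambda>x. \<Sum>i\<in>I. f i x)"
  using assms
proof (induction I rule: finite_induct)
  case empty then show ?case using poly_fun_const[of n d 0] by simp
next
  case (insert a F) then show ?case by (simp add: poly_fun_add)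
qed

lemma poly_fun_prod:
  assumes "finite I" "\<And>i. i \<in> I \<Longrightarrow> poly_fun n d (f i)"
  shows "poly_fun n (card I * d) (\<lambda>x. \<Prod>i\<in>I. f i x)"
  using assms
proof (induction I rule: finite_induct)
  case empty then show ?case using poly_fun_const[of n 0 1] by simp
next
  case (insert a F)
  have "poly_fun n (d + card F * d) (\<lambda>x. f a x * (\<Prod>i\<in>F. f i x))"
    by (rule poly_fun_mult) (use insert in auto)
  then show ?case using insert by simp
qed

lemma poly_fun_continuous:
  assumes "poly_fun n d f"
  shows "continuous_on UNIV f"
proof -
  obtain A c where A: "\<And>x. f x = (\<Sum>\<alpha>\<in>A. c \<alpha> * mon n \<alpha> x)" using poly_funE[OF assms] by blast
  have "continuous_on UNIV (\<lambda>x::nat\<Rightarrow>real. (\<Sum>\<alpha>\<in>A. c \<alpha> * (\<Prod>i<n. x i ^ \<alpha> i)))"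
    by (intro continuous_intros continuous_on_product_coordinates)
  then show ?thesis using A by (simp add: mon_def fun_eq_iff[symmetric] cong: continuous_on_cong)
qed

lemma mon_upd:
  assumes "i < n"
  shows "mon n \<alpha> (x(i := t)) = t ^ \<alpha> i * (\<Prod>j\<in>{..<n}-{i}. x j ^ \<alpha> j)"
proof -
  have e1: "mon n \<alpha> (x(i := t)) = (x(i := t)) i ^ \<alpha> i * (\<Prod>j\<in>{..<n}-{i}. (x(i := t)) j ^ \<alpha> j)"
    unfolding mon_def using assms by (subst prod.remove[of _ i]) auto
  have e2: "(\<Prod>j\<in>{..<n}-{i}. (x(i := t)) j ^ \<alpha> j) = (\<Prod>j\<in>{..<n}-{i}. x j ^ \<alpha> j)"
    by (rule prod.cong) auto
  show ?thesis by (simp only: e1 e2 fun_upd_same)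
qed

lemma poly_fun_deriv:
  assumes "poly_fun n d f" "i < n"
  shows "poly_fun n d (\<lambda>x. deriv (\<lambda>t. f (x(i := t))) (x i))"
proof -
  obtain A c where A: "finite A" "\<And>\<alpha>. \<alpha> \<in> A \<Longrightarrow> (\<forall>i\<ge>n. \<alpha> i = 0) \<and> (\<Sum>i<n. \<alpha> i) \<le> d"
    "\<And>x. f x = (\<Sum>\<alpha>\<in>A. c \<alpha> * mon n \<alpha> x)" using poly_funE[OF assms(1)] by blast
  define P where "P (x::nat\<Rightarrow>real) \<alpha> = (\<Prod>j\<in>{..<n}-{i}. x j ^ \<alpha> j)" for x \<alpha>
  have key: "deriv (\<lambda>t. f (x(i := t))) (x i) = (\<Sum>\<alpha>\<in>A. (c \<alpha> * real (\<alpha> i)) * mon n (\<alpha>(i := \<alpha> i - 1)) x)"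
    for x
  proof -
    have fe: "(\<lambda>t. f (x(i := t))) = (\<lambda>t. \<Sum>\<alpha>\<in>A. c \<alpha> * (t ^ \<alpha> i * P x \<alpha>))"
      by (simp add: A(3) mon_upd[OF assms(2)] P_def)
    have "((\<lambda>t. \<Sum>\<alpha>\<in>A. c \<alpha> * (t ^ \<alpha> i * P x \<alpha>)) has_real_derivative
        (\<Sum>\<alpha>\<in>A. c \<alpha> * ((real (\<alpha> i) * (x i) ^ (\<alpha> i - 1)) * P x \<alpha>))) (at (x i))"
      by (intro DERIV_sum DERIV_cmult DERIV_cmult_right) (metis DERIV_pow One_nat_def)
    then have "deriv (\<lambda>t. f (x(i := t))) (x i) = (\<Sum>\<alpha>\<in>A. c \<alpha> * ((real (\<alpha> i) * (x i) ^ (\<alpha> i - 1)) * P x \<alpha>))"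
      unfolding fe by (rule DERIV_imp_deriv)
    also have "\<dots> = (\<Sum>\<alpha>\<in>A. (c \<alpha> * real (\<alpha> i)) * mon n (\<alpha>(i := \<alpha> i - 1)) x)"
    proof (rule sum.cong[OF refl])
      fix \<alpha>
      have "mon n (\<alpha>(i := \<alpha> i - 1)) x = mon n (\<alpha>(i := \<alpha> i - 1)) (x(i := x i))" by simp
      also have "\<dots> = x i ^ (\<alpha> i - 1) * P x \<alpha>"
        unfolding mon_upd[OF assms(2)] P_def by (simp only: fun_upd_same, intro arg_cong2[where f=times] refl prod.cong) auto
      finally show "c \<alpha> * ((real (\<alpha> i) * (x i) ^ (\<alpha> i - 1)) * P x \<alpha>) = (c \<alpha> * real (\<alpha> i)) * mon n (\<alpha>(i := \<alpha> i - 1)) x"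
        by simp
    qed
    finally show ?thesis .
  qed
  show ?thesis
  proof (rule poly_fun_intro[where K=A and \<alpha>="\<lambda>\<alpha>. \<alpha>(i := \<alpha> i - 1)" and c="\<lambda>\<alpha>. c \<alpha> * real (\<alpha> i)"])
    fix \<alpha> assume a: "\<alpha> \<in> A"
    have "(\<Sum>j<n. (\<alpha>(i := \<alpha> i - 1)) j) \<le> (\<Sum>j<n. \<alpha> j)" by (rule sum_mono) auto
    then show "(\<forall>j\<ge>n. (\<alpha>(i := \<alpha> i - 1)) j = 0) \<and> (\<Sum>j<n. (\<alpha>(i := \<alpha> i - 1)) j) \<le> d"
      using A(2)[OF a] assms(2) by auto
  qed (use A(1) key in auto)
qed



definition schain :: "(nat \<Rightarrow> real) \<Rightarrow> nat \<Rightarrow> (nat \<Rightarrow> nat) \<Rightarrow> bool" where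
  "schain c r f \<longleftrightarrow> (\<forall>k<r. f k < f (Suc k) \<and> c (f k) * c (f (Suc k)) < 0)"

definition svar :: "(nat \<Rightarrow> real) \<Rightarrow> nat" where
  "svar c = (GREATEST r. \<exists>f. schain c r f)"

definition bnd :: "(nat \<Rightarrow> real) \<Rightarrow> nat \<Rightarrow> bool" where
  "bnd c N \<longleftrightarrow> (\<forall>k>N. c k = 0)"

lemma schain_mono: "schain c r f \<Longrightarrow> r' \<le> r \<Longrightarrow> schain c r' f"
  unfolding schain_def by auto

lemma schain_0: "schain c 0 f" unfolding schain_def by auto

lemma schain_nz: assumes "schain c r f" "k \<le> r" "0 < r" shows "c (f k) \<noteq> 0"
proof (cases "k < r")
  case True
  then have "c (f k) * c (f (Suc k)) < 0" using assms(1) unfolding schain_def by blast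
  then show ?thesis by auto
next
  case False
  then have k: "k = Suc (r - 1)" using assms by simp
  have "r - 1 < r" using assms by simp
  then have "c (f (r - 1)) * c (f (Suc (r - 1))) < 0" using assms(1) unfolding schain_def by blast
  then show ?thesis using k by auto
qed

lemma schain_ge: "schain c r f \<Longrightarrow> k \<le> r \<Longrightarrow> f 0 + k \<le> f k"
proof (induction k)
  case 0 then show ?case by simp
next
  case (Suc k)
  then have "k < r" by simp
  then have "f k < f (Suc k)" using Suc.prems(1) unfolding schain_def by blast
  moreover have "f 0 + k \<le> f k" using Suc by simp
  ultimately show ?case by simp
qed

lemma schain_bound:
  assumes "schain c r f" "bnd c N"
  shows "r \<le> N"
proof (cases "r = 0")
  case False
  have "c (f r) \<noteq> 0" using schain_nz[OF assms(1) order_refl] False by auto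
  then have "f r \<le> N" using assms(2) unfolding bnd_def by (meson not_le)
  moreover have "f 0 + r \<le> f r" using schain_ge[OF assms(1) order_refl] .
  ultimately show ?thesis by linarith
qed simp

lemma svar_ge: "schain c r f \<Longrightarrow> bnd c N \<Longrightarrow> r \<le> svar c"
  unfolding svar_def by (rule Greatest_le_nat[where b=N]) (auto intro: schain_bound)

lemma svar_chain: "bnd c N \<Longrightarrow> \<exists>f. schain c (svar c) f"
  unfolding svar_def by (rule GreatestI_nat[where k=0 and b=N]) (auto intro: schain_bound schain_0)

lemma svar_le_N: "bnd c N \<Longrightarrow> svar c \<le> N"
  using svar_chain schain_bound by blast

lemma svar_le_iff: "bnd c N \<Longrightarrow> svar c \<le> i \<longleftrightarrow> \<not> (\<exists>f. schain c (Suc i) f)"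
proof
  assume "bnd c N" "svar c \<le> i"
  then show "\<not> (\<exists>f. schain c (Suc i) f)" using svar_ge by fastforce
next
  assume b: "bnd c N" and n: "\<not> (\<exists>f. schain c (Suc i) f)"
  obtain f where "schain c (svar c) f" using svar_chain[OF b] by blast
  then show "svar c \<le> i" using n schain_mono by (metis not_less_eq_eq)
qed

lemma neg_sgn: "(x::real) * y < 0 \<longleftrightarrow> sgn x * sgn y < 0"
  by (simp add: sgn_mult[symmetric] sgn_less)

lemma scale_neg: "(s::real) \<noteq> 0 \<Longrightarrow> (s * x) * (s * y) < 0 \<longleftrightarrow> x * y < 0"
proof -
  assume assms: "(s::real) \<noteq> 0"
  have e: "(s * x) * (s * y) = (s * s) * (x * y)" by (simp add: algebra_simps)
  have p: "s * s > 0" using assms by (cases "s > 0") (auto simp: mult_neg_neg)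
  show ?thesis unfolding e using mult_less_cancel_left_pos[OF p, of "x*y" 0] by simp
qed

lemma svar_cong_sign:
  assumes "\<And>k. sgn (c k) = sgn (d k)"
  shows "schain c r f = schain d r f"
proof -
  have "c a * c b < 0 \<longleftrightarrow> d a * d b < 0" for a b
    using assms[of a] assms[of b] neg_sgn[of "c a" "c b"] neg_sgn[of "d a" "d b"] by simp
  then show ?thesis unfolding schain_def by auto
qed

lemma svar_scale:
  assumes "s \<noteq> 0"
  shows "svar (\<lambda>k. s * c k) = svar c"
proof -
  have "schain (\<lambda>k. s * c k) r f = schain c r f" for r f
    using scale_neg[OF assms] unfolding schain_def by simp
  then have "(\<lambda>r. \<exists>f. schain (\<lambda>k. s * c k) r f) = (\<lambda>r. \<exists>f. schain c r f)" by simp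
  then show ?thesis unfolding svar_def by simp
qed

lemma bnd_coeff: "bnd (coeff p) (degree p)"
  unfolding bnd_def by (simp add: coeff_eq_0)

lemma coeff_lin_mult:
  fixes h :: "real poly"
  shows   "coeff ([:-a, 1:] * h) k = (case k of 0 \<Rightarrow> - a * coeff h 0 | Suc k' \<Rightarrow> coeff h k' - a * coeff h (Suc k'))"
proof (cases k)
  case (Suc k')
  have "coeff ([:-a, 1:] * h) (Suc k') = - a * coeff h (Suc k') + coeff h k'"
    by (simp add: mult_pCons_left)
  then show ?thesis using Suc by simp
qed (simp add: mult_pCons_left)

lemma sign3:
  fixes x y u v :: real
  assumes "x * u < 0" "y * v < 0" "u * v < 0"
  shows "x * y < 0"
  using assms by (auto simp: mult_less_0_iff)

lemma sign3':
  fixes x y u v :: real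
  assumes "x * u < 0" "y * v < 0" "u * v > 0"
  shows "x * y > 0"
  using assms by (auto simp: mult_less_0_iff zero_less_mult_iff)

lemma sq_pos: "(x::real) \<noteq> 0 \<Longrightarrow> x * x > 0"
  by (cases "x > 0") (auto simp: mult_neg_neg)

lemma sign2:
  fixes x u v :: real
  assumes "x * u < 0" "u * v > 0"
  shows "x * v < 0"
  using assms by (auto simp: mult_less_0_iff zero_less_mult_iff)

lemma descartes_step:
  assumes h: "h \<noteq> 0" and a: "a > 0"
  shows "svar (coeff h) + 1 \<le> svar (coeff ([:-a, 1:] * h))"
proof -
  define b where "b = coeff h"
  define n where "n = degree h"
  define c where "c = coeff ([:-a, 1:] * h)"
  define r where "r = svar b"
  have bn: "b n \<noteq> 0" using h unfolding b_def n_def by simp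
  have bb: "bnd b n" unfolding b_def n_def by (rule bnd_coeff)
  have cb: "bnd c (n + 1)"
  proof -
    have "degree ([:-a, 1:] * h) \<le> degree [:-a, 1:] + degree h" by (rule degree_mult_le)
    then have "degree ([:-a, 1:] * h) \<le> n + 1" unfolding n_def by simp
    then show ?thesis unfolding c_def bnd_def by (meson coeff_eq_0 le_less_trans)
  qed
  have cform: "c k = (case k of 0 \<Rightarrow> - a * b 0 | Suc k' \<Rightarrow> b k' - a * b (Suc k'))" for k
    unfolding c_def b_def by (rule coeff_lin_mult)
  have cn1: "c (n + 1) = b n"
    using cform[of "n+1"] bb unfolding bnd_def by simp
  obtain f where f: "schain b r f" and fl: "b (f r) * b n > 0"
  proof (cases "r = 0")
    case True
    show ?thesis by (rule that[of "\<lambda>_. n"]) (use True bn sq_pos in \<open>auto simp: schain_0\<close>)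
  next
    case False
    obtain f where f: "schain b r f" using svar_chain[OF bb] unfolding r_def by blast
    have nz: "b (f r) \<noteq> 0" using schain_nz[OF f order_refl] False by auto
    have "\<not> b (f r) * b n < 0"
    proof
      assume neg: "b (f r) * b n < 0"
      have "f r \<le> n" using nz bb unfolding bnd_def by (meson not_le)
      moreover have "f r \<noteq> n" using neg sq_pos[OF bn] by auto
      ultimately have "f r < n" by simp
      then have "schain b (Suc r) (f(Suc r := n))"
        using f neg unfolding schain_def by (auto simp: less_Suc_eq)
      then have "Suc r \<le> svar b" using svar_ge bb by blast
      then show False unfolding r_def by simp
    qed
    then have "b (f r) * b n > 0" using nz bn by (simp add: not_less order_le_less)
    then show ?thesis using f that by blast
  qed
  have fnz: "b (f k) \<noteq> 0" if "k \<le> r" for k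
  proof (cases "r = 0")
    case True then show ?thesis using fl that by auto
  next
    case False then show ?thesis using schain_nz[OF f that] by auto
  qed
  define P where "P k l \<longleftrightarrow> (k = 0 \<or> f (k - 1) < l) \<and> b l * b (f k) > 0" for k l
  define g where "g k = (LEAST l. P k l)" for k
  have Pf: "P k (f k)" if "k \<le> r" for k
  proof -
    have "k = 0 \<or> f (k - 1) < f k"
    proof (cases k)
      case (Suc k')
      then have "k' < r" using that by simp
      then have "f k' < f (Suc k')" using f unfolding schain_def by blast
      then show ?thesis using Suc by simp
    qed simp
    then show ?thesis unfolding P_def using sq_pos[OF fnz[OF that]] by simp
  qed
  have gP: "P k (g k)" if "k \<le> r" for k unfolding g_def by (rule LeastI[where P="P k", OF Pf[OF that]])
  have gle: "g k \<le> f k" if "k \<le> r" for k unfolding g_def by (rule Least_le[where P="P k", OF Pf[OF that]])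
  have gmin: "\<not> P k l" if "l < g k" for k l using not_less_Least[of l "P k"] that unfolding g_def by simp
  have csign: "c (g k) * b (f k) < 0" if k: "k \<le> r" for k
  proof (cases "g k")
    case 0
    have "b (g k) * b (f k) > 0" using gP[OF k] unfolding P_def by blast
    then have "b 0 * b (f k) > 0" using 0 by simp
    have "c (g k) * b (f k) = - (a * (b 0 * b (f k)))" using cform[of 0] 0 by simp
    moreover have "a * (b 0 * b (f k)) > 0" using a \<open>b 0 * b (f k) > 0\<close> by simp
    ultimately show ?thesis by linarith
  next
    case (Suc l)
    have bl: "b l * b (f k) \<le> 0"
    proof (cases "k = 0 \<or> f (k - 1) < l")
      case True
      then have "\<not> P k l" using gmin[of l k] Suc by simp
      then show ?thesis using True unfolding P_def by (auto simp: not_less)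
    next
      case False
      then have k0: "k > 0" and "f (k - 1) \<ge> l" by auto
      moreover have "f (k - 1) < Suc l" using gP[OF k] Suc k0 unfolding P_def by simp
      ultimately have "f (k - 1) = l" by simp
      moreover have "k - 1 < r" using k k0 by simp
      then have "b (f (k - 1)) * b (f (Suc (k - 1))) < 0" using f unfolding schain_def by blast
      moreover have "Suc (k - 1) = k" using k0 by simp
      ultimately show ?thesis by (simp add: less_imp_le)
    qed
    have "b (g k) * b (f k) > 0" using gP[OF k] unfolding P_def by blast
    then have bg: "b (Suc l) * b (f k) > 0" using Suc by simp
    have e: "c (Suc l) = b l - a * b (Suc l)" using cform[of "Suc l"] by simp
    have "c (g k) * b (f k) = (b l - a * b (Suc l)) * b (f k)" using Suc e by simp
    also have "\<dots> = b l * b (f k) - a * (b (Suc l) * b (f k))" by (simp add: algebra_simps)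
    finally have "c (g k) * b (f k) = b l * b (f k) - a * (b (Suc l) * b (f k))" .
    moreover have "a * (b (Suc l) * b (f k)) > 0" using a bg by simp
    ultimately show ?thesis using bl by linarith
  qed
  define F where "F k = (if k \<le> r then g k else n + 1)" for k
  have "schain c (Suc r) F"
    unfolding schain_def
  proof (intro allI impI conjI)
    fix k assume k: "k < Suc r"
    show "F k < F (Suc k)"
    proof (cases "k < r")
      case True
      have "g k \<le> f k" using gle True by simp
      moreover have "f k < g (Suc k)" using gP[of "Suc k"] True unfolding P_def by simp
      ultimately show ?thesis using True unfolding F_def by simp
    next
      case False
      then have "k = r" using k by simp
      moreover have "f r \<le> n" using fnz[of r] bb unfolding bnd_def by (meson not_le order_refl)
      ultimately show ?thesis using gle[of r] unfolding F_def by simp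
    qed
    show "c (F k) * c (F (Suc k)) < 0"
    proof (cases "k < r")
      case True
      have "b (f k) * b (f (Suc k)) < 0" using f True unfolding schain_def by simp
      then have "c (g k) * c (g (Suc k)) < 0"
        using sign3[OF csign[of k] csign[of "Suc k"]] True by simp
      then show ?thesis using True unfolding F_def by simp
    next
      case False
      then have kr: "k = r" using k by simp
      have "c (g r) * b n < 0"
        using sign2[OF csign[of r] fl] by simp
      then show ?thesis using kr cn1 unfolding F_def by simp
    qed
  qed
  then have "Suc r \<le> svar c" using svar_ge cb by blast
  then show ?thesis unfolding r_def b_def c_def by simp
qed


lemma descartes_lower_aux:
  assumes "h \<noteq> 0" "\<forall>a\<in>set as. a > 0"
  shows "svar (coeff h) + length as \<le> svar (coeff ((\<Prod>a\<leftarrow>as. [:-a, 1:]) * h))"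
  using assms(2)
proof (induction as)
  case Nil then show ?case by simp
next
  case (Cons a as)
  have nz: "(\<Prod>a\<leftarrow>as. [:-a, 1:]) * h \<noteq> 0"
    using assms(1) by (auto simp: prod_list_zero_iff)
  have step: "svar (coeff ((\<Prod>a\<leftarrow>as. [:-a, 1:]) * h)) + 1 \<le> svar (coeff ([:-a, 1:] * ((\<Prod>a\<leftarrow>as. [:-a, 1:]) * h)))"
    by (rule descartes_step[OF nz]) (use Cons in auto)
  have eq: "(\<Prod>x\<leftarrow>a#as. [:-x, 1:]) * h = [:-a, 1:] * ((\<Prod>x\<leftarrow>as. [:-x, 1:]) * h)"
    by (simp only: list.map prod_list.Cons mult.assoc)
  have IH: "svar (coeff h) + length as \<le> svar (coeff ((\<Prod>a\<leftarrow>as. [:-a, 1:]) * h))"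
    using Cons by simp
  have "length (a # as) = length as + 1" by simp
  then show ?case unfolding eq using step IH by linarith
qed

lemma prod_list_filter_split:
  fixes f :: "'a \<Rightarrow> 'b::comm_monoid_mult"
  shows "prod_list (map f xs) = prod_list (map f (filter P xs)) * prod_list (map f (filter (\<lambda>x. \<not> P x) xs))"
  by (induction xs) (auto simp: mult_ac)

lemma descartes_lower:
  "length (filter (\<lambda>\<mu>. \<mu> > 0) \<mu>s) \<le> svar (coeff (\<Prod>\<mu>\<leftarrow>\<mu>s. [:-\<mu>, 1:]))"
proof -
  let ?h = "\<Prod>\<mu>\<leftarrow>filter (\<lambda>\<mu>. \<not> \<mu> > 0) \<mu>s. [:-\<mu>, 1:]"
  have h: "?h \<noteq> 0" by (auto simp: prod_list_zero_iff)
  have "svar (coeff ?h) + length (filter (\<lambda>\<mu>. \<mu> > 0) \<mu>s)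
    \<le> svar (coeff ((\<Prod>\<mu>\<leftarrow>filter (\<lambda>\<mu>. \<mu> > 0) \<mu>s. [:-\<mu>, 1:]) * ?h))"
    by (rule descartes_lower_aux[OF h]) auto
  also have "(\<Prod>\<mu>\<leftarrow>filter (\<lambda>\<mu>. \<mu> > 0) \<mu>s. [:-\<mu>, 1:]) * ?h = (\<Prod>\<mu>\<leftarrow>\<mu>s. [:-\<mu>, 1:])"
    by (rule prod_list_filter_split[symmetric])
  finally show ?thesis by simp
qed

lemma coeff_lin_mult':
  fixes h :: "real poly"
  shows "coeff ([:e, 1:] * h) k = (case k of 0 \<Rightarrow> e * coeff h 0 | Suc k' \<Rightarrow> coeff h k' + e * coeff h (Suc k'))"
proof (cases k)
  case (Suc k')
  have "coeff ([:e, 1:] * h) (Suc k') = e * coeff h (Suc k') + coeff h k'"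
    by (simp add: mult_pCons_left)
  then show ?thesis using Suc by simp
qed (simp add: mult_pCons_left)

lemma coeff_prod_neg:
  "coeff (\<Prod>\<mu>\<leftarrow>\<mu>s. [:\<mu>, 1:]) k = (-1) ^ (length \<mu>s + k) * coeff (\<Prod>\<mu>\<leftarrow>\<mu>s. [:-\<mu>, 1:] :: real poly) k"
proof (induction \<mu>s arbitrary: k)
  case Nil then show ?case by (cases k) auto
next
  case (Cons \<mu> \<mu>s)
  let ?H = "\<Prod>\<mu>\<leftarrow>\<mu>s. [:-\<mu>, 1:] :: real poly"
  let ?H' = "\<Prod>\<mu>\<leftarrow>\<mu>s. [:\<mu>, 1:] :: real poly"
  show ?case
  proof (cases k)
    case 0
    have "coeff ([:\<mu>, 1:] * ?H') 0 = \<mu> * coeff ?H' 0" by (simp add: coeff_lin_mult')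
    moreover have "coeff ([:-\<mu>, 1:] * ?H) 0 = - \<mu> * coeff ?H 0" by (simp add: coeff_lin_mult)
    ultimately show ?thesis using Cons[of 0] 0 by simp
  next
    case (Suc k')
    have "coeff ([:\<mu>, 1:] * ?H') (Suc k') = coeff ?H' k' + \<mu> * coeff ?H' (Suc k')" by (simp add: coeff_lin_mult')
    moreover have "coeff ([:-\<mu>, 1:] * ?H) (Suc k') = coeff ?H k' - \<mu> * coeff ?H (Suc k')" by (simp add: coeff_lin_mult)
    ultimately show ?thesis using Cons[of k'] Cons[of "Suc k'"] Suc by (simp add: algebra_simps)
  qed
qed

lemma coeff_prod_zero_roots:
  "k < length (filter (\<lambda>\<mu>. \<mu> = 0) \<mu>s) \<Longrightarrow> coeff (\<Prod>\<mu>\<leftarrow>\<mu>s. [:-\<mu>, 1:] :: real poly) k = 0"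
proof (induction \<mu>s arbitrary: k)
  case Nil then show ?case by simp
next
  case (Cons \<mu> \<mu>s)
  let ?H = "\<Prod>\<mu>\<leftarrow>\<mu>s. [:-\<mu>, 1:] :: real poly"
  show ?case
  proof (cases k)
    case 0
    then have "coeff ([:-\<mu>, 1:] * ?H) k = - \<mu> * coeff ?H 0" by (simp add: coeff_lin_mult)
    moreover have "\<mu> = 0 \<or> coeff ?H 0 = 0" using Cons 0 by (cases "\<mu> = 0") auto
    ultimately show ?thesis by auto
  next
    case (Suc k')
    then have e: "coeff ([:-\<mu>, 1:] * ?H) k = coeff ?H k' - \<mu> * coeff ?H (Suc k')" by (simp add: coeff_lin_mult)
    show ?thesis
    proof (cases "\<mu> = 0")
      case True
      then show ?thesis using e Cons Suc by simp
    next
      case False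
      then have "Suc k' < length (filter (\<lambda>\<mu>. \<mu> = 0) \<mu>s)" using Cons.prems Suc by simp
      then show ?thesis using e Cons.IH[of k'] Cons.IH[of "Suc k'"] by simp
    qed
  qed
qed

lemma bnd_prod: "bnd (coeff (\<Prod>\<mu>\<leftarrow>\<mu>s. [:-\<mu>, 1:] :: real poly)) (length \<mu>s)"
proof -
  have "degree (\<Prod>\<mu>\<leftarrow>\<mu>s. [:-\<mu>, 1:] :: real poly) \<le> length \<mu>s"
  proof (induction \<mu>s)
    case (Cons \<mu> \<mu>s)
    have "degree ([:-\<mu>, 1:] * (\<Prod>\<mu>\<leftarrow>\<mu>s. [:-\<mu>, 1:] :: real poly)) \<le> degree [:-\<mu>, 1:] + degree (\<Prod>\<mu>\<leftarrow>\<mu>s. [:-\<mu>, 1:] :: real poly)"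
      by (rule degree_mult_le)
    then show ?case using Cons by simp
  qed simp
  then show ?thesis unfolding bnd_def by (simp add: coeff_eq_0)
qed

lemma schain_transfer:
  assumes "schain c r f" "\<And>k. k \<le> r \<Longrightarrow> d (f k) = c (f k)"
  shows "schain d r f"
  using assms unfolding schain_def by simp

lemma svar_single:
  assumes "\<And>k. k \<noteq> n \<Longrightarrow> c k = 0"
  shows "svar c = 0"
proof -
  have b: "bnd c n" using assms unfolding bnd_def by simp
  obtain f where f: "schain c (svar c) f" using svar_chain[OF b] by blast
  show ?thesis
  proof (rule ccontr)
    assume "svar c \<noteq> 0"
    then have "f 0 < f (Suc 0)" "c (f 0) * c (f (Suc 0)) < 0" using f unfolding schain_def by auto
    then show False using assms by (cases "f 0 = n") auto
  qed
qed

lemma top_deletion: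
  assumes b: "bnd c n" and cn: "c n \<noteq> 0" and n': "n' < n" "c n' \<noteq> 0"
    and gap: "\<And>k. n' < k \<Longrightarrow> k < n \<Longrightarrow> c k = 0"
  shows "svar c \<le> svar (\<lambda>k. if k \<le> n' then c k else 0) + (if c n' * c n < 0 then 1 else 0)"
proof -
  define d where "d = (\<lambda>k. if k \<le> n' then c k else 0)"
  have bd: "bnd d n'" unfolding d_def bnd_def by simp
  obtain f where f: "schain c (svar c) f" using svar_chain[OF b] by blast
  define r where "r = svar c"
  have fr: "schain c r f" using f r_def by simp
  show ?thesis
  proof (cases "r = 0")
    case True then show ?thesis unfolding r_def by simp
  next
    case False
    have nz: "c (f k) \<noteq> 0" if "k \<le> r" for k using schain_nz[OF fr that] False by simp
    have len: "f k \<le> n" if "k \<le> r" for k using nz[OF that] b unfolding bnd_def by (meson not_le)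
    have lt: "f k < f r" if "k < r" for k
    proof -
      have "f k + j \<le> f (k + j)" if "k + j \<le> r" for j
        using that
      proof (induction j)
        case (Suc j)
        then have "k + j < r" by simp
        then have "f (k + j) < f (Suc (k + j))" using fr unfolding schain_def by blast
        then show ?case using Suc by simp
      qed simp
      from this[of "r - k"] show ?thesis using that by simp
    qed
    have low: "f k \<le> n'" if "k < r" for k
    proof -
      have "f k < n" using lt[OF that] len[of r] by simp
      moreover have "c (f k) \<noteq> 0" using nz that by simp
      ultimately show ?thesis using gap by (meson not_le)
    qed
    show ?thesis
    proof (cases "f r = n")
      case False
      then have "f r \<le> n'" using len[of r] nz[of r] gap by (meson le_neq_implies_less not_le order_refl)
      then have "schain d r f" using low by (intro schain_transfer[OF fr]) (auto simp: d_def le_less)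
      then have "r \<le> svar d" using svar_ge bd by blast
      then show ?thesis unfolding r_def d_def by simp
    next
      case True
      have r1: "Suc (r - 1) = r" using False by simp
      have prev: "c (f (r - 1)) * c n < 0"
        using fr True False unfolding schain_def by (metis r1 diff_less less_one not_gr_zero)
      have "schain d (r - 1) f"
        by (rule schain_transfer[OF schain_mono[OF fr]]) (use low False in \<open>auto simp: d_def\<close>)
      then have A: "r - 1 \<le> svar d" using svar_ge bd by blast
      show ?thesis
      proof (cases "c n' * c n < 0")
        case True then show ?thesis using A unfolding r_def d_def by simp
      next
        case neg: False
        then have pos: "c n * c n' > 0" using cn n'(2) by (simp add: mult.commute not_less order_le_less)
        have "f (r - 1) \<le> n'" using low False by simp
        moreover have "f (r - 1) \<noteq> n'" using prev neg by auto
        ultimately have ltn: "f (r - 1) < n'" by simp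
        have "schain d r (f(r := n'))"
          unfolding schain_def
        proof (intro allI impI)
          fix k assume k: "k < r"
          show "(f(r := n')) k < (f(r := n')) (Suc k) \<and> d ((f(r := n')) k) * d ((f(r := n')) (Suc k)) < 0"
          proof (cases "Suc k = r")
            case True
            then have kk: "k = r - 1" by simp
            have "c (f (r - 1)) * c n' < 0" using sign2[OF prev pos] .
            then show ?thesis using True kk ltn low[of k] k by (simp add: d_def)
          next
            case False
            then have "Suc k < r" using k by simp
            then show ?thesis using fr low[of k] low[of "Suc k"] unfolding schain_def by (simp add: d_def)
          qed
        qed
        then have "r \<le> svar d" using svar_ge bd by blast
        then show ?thesis unfolding r_def d_def by simp
      qed
    qed
  qed
qed


lemma sign_pair_bound:
  fixes x :: real
  assumes "x \<noteq> 0" "n' < n"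
  shows "(if x < 0 then 1 else 0) + (if (-1) ^ (n' + n) * x < 0 then 1 else (0::nat)) \<le> n - n'"
proof (cases "n = Suc n'")
  case True
  then have "(-1::real) ^ (n' + n) = -1" by simp
  then show ?thesis using assms True by auto
next
  case False
  then have "n - n' \<ge> 2" using assms by simp
  then show ?thesis by (auto split: if_splits)
qed

lemma descartes_upper:
  "bnd c n \<Longrightarrow> (\<forall>k<z. c k = 0) \<Longrightarrow> svar c + svar (\<lambda>k. (-1) ^ k * c k) \<le> n - z"
proof (induction n arbitrary: c rule: less_induct)
  case (less n c)
  define ng where "ng c = (\<lambda>k. (-1::real) ^ k * c k)" for c :: "nat \<Rightarrow> real"
  show ?case
  proof (cases "c n = 0")
    case True
    show ?thesis
    proof (cases "n = 0")
      case True
      have "c k = 0" for k using less.prems(1) \<open>c n = 0\<close> True unfolding bnd_def by (cases k) auto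
      then have "svar c = 0" "svar (\<lambda>k. (-1) ^ k * c k) = 0"
        by (intro svar_single[of n]; simp)+
      then show ?thesis by simp
    next
      case False
      have "bnd c (n - 1)" using less.prems(1) \<open>c n = 0\<close> False unfolding bnd_def
        by (metis Suc_pred' less_Suc_eq not_gr0 not_less_eq)
      then have "svar c + svar (\<lambda>k. (-1) ^ k * c k) \<le> (n - 1) - z"
        using less.IH[of "n - 1" c] less.prems(2) False by simp
      then show ?thesis by simp
    qed
  next
    case False
    define S where "S = {k. k < n \<and> c k \<noteq> 0}"
    have finS: "finite S" by (rule finite_subset[of S "{..<n}"]) (auto simp: S_def)
    show ?thesis
    proof (cases "S = {}")
      case True
      have "c k = 0" if "k \<noteq> n" for k
      proof (cases "k < n")
        case True
        then have "k \<notin> S" using \<open>S = {}\<close> by simp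
        then show ?thesis using True unfolding S_def by simp
      next
        case False
        then have "k > n" using that by simp
        then show ?thesis using less.prems(1) unfolding bnd_def by simp
      qed
      then have "svar c = 0" "svar (\<lambda>k. (-1) ^ k * c k) = 0"
        by (intro svar_single[of n]; simp)+
      then show ?thesis by simp
    next
      case ne: False
      define n' where "n' = Max S"
      have n'S: "n' \<in> S" unfolding n'_def using finS ne by (rule Max_in)
      then have n': "n' < n" "c n' \<noteq> 0" unfolding S_def by auto
      have gap: "c k = 0" if "n' < k" "k < n" for k
      proof (rule ccontr)
        assume "c k \<noteq> 0"
        then have "k \<in> S" using that unfolding S_def by simp
        then have "k \<le> n'" unfolding n'_def using finS by simp
        then show False using that by simp
      qed
      define d where "d = (\<lambda>k. if k \<le> n' then c k else 0)"
      have A: "svar c \<le> svar d + (if c n' * c n < 0 then 1 else 0)"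
        unfolding d_def by (rule top_deletion[OF less.prems(1) False n' gap])
      have bng: "bnd (ng c) n" using less.prems(1) unfolding bnd_def ng_def by simp
      have B: "svar (ng c) \<le> svar (\<lambda>k. if k \<le> n' then ng c k else 0) + (if ng c n' * ng c n < 0 then 1 else 0)"
        by (rule top_deletion[OF bng]) (use False n' gap in \<open>auto simp: ng_def\<close>)
      have eqd: "(\<lambda>k. if k \<le> n' then ng c k else 0) = ng d" unfolding ng_def d_def by auto
      have zn: "z \<le> n'" using less.prems(2) n'(2) by (meson not_le)
      have IH: "svar d + svar (ng d) \<le> n' - z"
        using less.IH[of n' d] n'(1) less.prems(2) unfolding ng_def d_def bnd_def by simp
      have prodeq: "ng c n' * ng c n = (-1) ^ (n' + n) * (c n' * c n)"
        unfolding ng_def by (simp add: power_add algebra_simps)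
      have SB: "(if c n' * c n < 0 then 1 else 0) + (if ng c n' * ng c n < 0 then 1 else (0::nat)) \<le> n - n'"
        unfolding prodeq by (rule sign_pair_bound) (use False n' in auto)
      have "svar c + svar (ng c) \<le> n - z" using A B IH SB zn n'(1) unfolding eqd by linarith
      then show ?thesis unfolding ng_def .
    qed
  qed
qed

lemma count3: "length (filter (\<lambda>\<mu>. \<mu> > 0) \<mu>s) + length (filter (\<lambda>\<mu>. \<mu> < 0) \<mu>s) + length (filter (\<lambda>\<mu>. \<mu> = 0) \<mu>s) = length (\<mu>s :: real list)"
  by (induction \<mu>s) auto

theorem descartes_real_rooted:
  "svar (coeff (\<Prod>\<mu>\<leftarrow>\<mu>s. [:-\<mu>, 1:] :: real poly)) = length (filter (\<lambda>\<mu>. \<mu> > 0) \<mu>s)"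
proof -
  let ?P = "\<Prod>\<mu>\<leftarrow>\<mu>s. [:-\<mu>, 1:] :: real poly"
  let ?P' = "\<Prod>\<mu>\<leftarrow>\<mu>s. [:\<mu>, 1:] :: real poly"
  define m where "m = length \<mu>s"
  have L1: "length (filter (\<lambda>\<mu>. \<mu> > 0) \<mu>s) \<le> svar (coeff ?P)" by (rule descartes_lower)
  have "length (filter (\<lambda>\<mu>. \<mu> > 0) (map uminus \<mu>s)) \<le> svar (coeff (\<Prod>\<mu>\<leftarrow>map uminus \<mu>s. [:-\<mu>, 1:]))"
    by (rule descartes_lower)
  moreover have "(\<Prod>\<mu>\<leftarrow>map uminus \<mu>s. [:-\<mu>, 1:]) = ?P'" by (simp add: o_def)
  moreover have "length (filter (\<lambda>\<mu>. \<mu> > 0) (map uminus \<mu>s)) = length (filter (\<lambda>\<mu>. \<mu> < 0) \<mu>s)"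
    by (simp add: filter_map o_def)
  ultimately have L2: "length (filter (\<lambda>\<mu>. \<mu> < 0) \<mu>s) \<le> svar (coeff ?P')" by simp
  have "coeff ?P' = (\<lambda>k. (-1) ^ m * ((-1) ^ k * coeff ?P k))"
    unfolding m_def by (rule ext, subst coeff_prod_neg) (simp add: power_add)
  then have "svar (coeff ?P') = svar (\<lambda>k. (-1) ^ k * coeff ?P k)"
    by (simp add: svar_scale)
  moreover have "svar (coeff ?P) + svar (\<lambda>k. (-1) ^ k * coeff ?P k) \<le> m - length (filter (\<lambda>\<mu>. \<mu> = 0) \<mu>s)"
    by (rule descartes_upper) (use bnd_prod coeff_prod_zero_roots in \<open>auto simp: m_def\<close>)
  ultimately show ?thesis using L1 L2 count3[of \<mu>s] unfolding m_def by linarith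
qed



lemma poly_lin_prod: fixes as :: "'a::comm_ring_1 list" shows "poly (\<Prod>a\<leftarrow>as. [:-a, 1:]) y = (\<Prod>a\<leftarrow>as. y - a)"
  by (induction as) (auto simp: algebra_simps)

lemma real_sym_char_poly_split:
  fixes M :: "real mat"
  assumes M: "M \<in> carrier_mat m m" and sym: "\<And>i j. i < m \<Longrightarrow> j < m \<Longrightarrow> M $$ (i, j) = M $$ (j, i)"
  shows "\<exists>ls. length ls = m \<and> char_poly M = (\<Prod>l\<leftarrow>ls. [:-l, 1:])"
proof -
  interpret rh: map_poly_inj_comm_ring_hom "of_real :: real \<Rightarrow> complex" ..
  let ?MC = "map_mat complex_of_real M"
  have MC: "?MC \<in> carrier_mat m m" using M by simp
  obtain as where as: "char_poly ?MC = (\<Prod>a\<leftarrow>as. [:-a, 1:])" "length as = m"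
    using char_poly_factorized[OF MC] by blast
  have real: "Im a = 0" if a: "a \<in> set as" for a
  proof -
    have "poly (char_poly ?MC) a = 0" using a unfolding as(1) poly_lin_prod
      by (auto simp: prod_list_zero_iff)
    then have "eigenvalue ?MC a" using eigenvalue_root_char_poly[OF MC] by simp
    then obtain v where v: "v \<in> carrier_vec m" "v \<noteq> 0\<^sub>v m" "?MC *\<^sub>v v = a \<cdot>\<^sub>v v"
      unfolding eigenvalue_def eigenvector_def using M by auto
    have Mv: "(?MC *\<^sub>v v) $ i = (\<Sum>j=0..<m. complex_of_real (M $$ (i, j)) * v $ j)" if "i < m" for i
      using that v(1) M by (auto simp: scalar_prod_def mult.commute)
    define S where "S = (\<Sum>i=0..<m. cnj (v $ i) * (\<Sum>j=0..<m. complex_of_real (M $$ (i, j)) * v $ j))"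
    define N where "N = (\<Sum>i=0..<m. (cmod (v $ i))\<^sup>2)"
    have S1: "S = a * complex_of_real N"
    proof -
      have "S = (\<Sum>i=0..<m. cnj (v $ i) * (a * v $ i))"
        unfolding S_def using Mv v(3) v(1) by (intro sum.cong refl) (metis atLeastLessThan_iff index_smult_vec(1) carrier_vecD)
      also have "\<dots> = a * (\<Sum>i=0..<m. cnj (v $ i) * v $ i)" by (simp add: sum_distrib_left algebra_simps)
      also have "(\<Sum>i=0..<m. cnj (v $ i) * v $ i) = complex_of_real N"
        unfolding N_def of_real_sum by (intro sum.cong refl) (metis complex_norm_square mult.commute)
      finally show ?thesis .
    qed
    have S2: "cnj S = S"
    proof -
      have "cnj S = (\<Sum>i=0..<m. \<Sum>j=0..<m. v $ i * complex_of_real (M $$ (i, j)) * cnj (v $ j))"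
        unfolding S_def by (simp add: sum_distrib_left algebra_simps)
      also have "\<dots> = (\<Sum>j=0..<m. \<Sum>i=0..<m. v $ i * complex_of_real (M $$ (i, j)) * cnj (v $ j))"
        by (rule sum.swap)
      also have "\<dots> = (\<Sum>j=0..<m. \<Sum>i=0..<m. cnj (v $ j) * complex_of_real (M $$ (j, i)) * v $ i)"
        by (intro sum.cong refl) (simp add: sym algebra_simps)
      also have "\<dots> = S" unfolding S_def by (simp add: sum_distrib_left algebra_simps)
      finally show ?thesis .
    qed
    have "Im S = 0" using S2 by (metis complex_cnj_cancel_iff complex_cnj_complex_of_real complex_is_Real_iff Reals_cnj_iff)
    then have "Im a * N = 0" using S1 by simp
    moreover have "N > 0"
    proof -
      obtain i where i: "i < m" "v $ i \<noteq> 0" using v(1,2) by (metis carrier_vecD eq_vecI index_zero_vec(1,2))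
      have "(cmod (v $ i))\<^sup>2 > 0" using i by simp
      moreover have "(cmod (v $ i))\<^sup>2 \<le> N" unfolding N_def
        by (rule member_le_sum) (use i in auto)
      ultimately show ?thesis by linarith
    qed
    ultimately show ?thesis by simp
  qed
  define ls where "ls = map Re as"
  have asls: "map complex_of_real ls = as"
    unfolding ls_def using real by (induction as) (auto simp: complex_eq_iff)
  have "map_poly complex_of_real (\<Prod>l\<leftarrow>ls. [:-l, 1:]) = (\<Prod>l\<leftarrow>ls. [:- complex_of_real l, 1:])"
    by (simp add: rh.hom_prod_list o_def)
  also have "\<dots> = (\<Prod>a\<leftarrow>as. [:-a, 1:])" unfolding asls[symmetric] by (simp add: o_def)
  also have "\<dots> = map_poly complex_of_real (char_poly M)"
    unfolding as(1)[symmetric] by (rule of_real_hom.char_poly_hom[OF M])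
  finally have "char_poly M = (\<Prod>l\<leftarrow>ls. [:-l, 1:])" by simp
  moreover have "length ls = m" using as(2) unfolding ls_def by simp
  ultimately show ?thesis by blast
qed


lemma prod_list_map_remove1':
  fixes f :: "'a \<Rightarrow> 'b::comm_monoid_mult"
  shows "x \<in> set xs \<Longrightarrow> prod_list (map f xs) = f x * prod_list (map f (remove1 x xs))"
  by (induction xs) (auto simp: mult_ac)

lemma prod_list_mset_eq:
  fixes f :: "'a \<Rightarrow> 'b::comm_monoid_mult"
  shows "mset xs = mset ys \<Longrightarrow> prod_list (map f xs) = prod_list (map f ys)"
  by (metis mset_map prod_mset_prod_list)

lemma lin_prod_mset:
  "(\<Prod>l\<leftarrow>xs. [:-l, 1:] :: real poly) = (\<Prod>l\<leftarrow>ys. [:-l, 1:]) \<Longrightarrow> mset xs = mset ys"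
proof (induction xs arbitrary: ys)
  case Nil
  show ?case
  proof (cases ys)
    case (Cons y ys')
    have "poly (\<Prod>l\<leftarrow>ys. [:-l, 1:] :: real poly) y = 0" unfolding poly_lin_prod using Cons by simp
    then show ?thesis using Nil.prems by simp
  qed simp
next
  case (Cons x xs)
  have "poly (\<Prod>l\<leftarrow>ys. [:-l, 1:] :: real poly) x = 0" unfolding Cons.prems[symmetric] by simp
  then have xy: "x \<in> set ys" unfolding poly_lin_prod by (auto simp: prod_list_zero_iff)
  have "[:-x, 1:] * (\<Prod>l\<leftarrow>xs. [:-l, 1:]) = [:-x, 1:] * (\<Prod>l\<leftarrow>remove1 x ys. [:-l, 1:] :: real poly)"
    using Cons.prems prod_list_map_remove1'[OF xy, of "\<lambda>l. [:-l, 1:] :: real poly"] by simp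
  then have "(\<Prod>l\<leftarrow>xs. [:-l, 1:]) = (\<Prod>l\<leftarrow>remove1 x ys. [:-l, 1:] :: real poly)"
    by (subst (asm) mult_left_cancel) auto
  then have "mset xs = mset (remove1 x ys)" by (rule Cons.IH)
  then show ?case using xy by simp
qed

lemma eigenvalues_desc_sym:
  fixes M :: "real mat"
  assumes M: "M \<in> carrier_mat m m" and sym: "\<And>i j. i < m \<Longrightarrow> j < m \<Longrightarrow> M $$ (i, j) = M $$ (j, i)"
  shows "length (eigenvalues_desc M) = m \<and> sorted_wrt (\<ge>) (eigenvalues_desc M) \<and>
         char_poly M = (\<Prod>l\<leftarrow>eigenvalues_desc M. [:-l, 1:])"
proof -
  obtain ls where ls: "length ls = m" "char_poly M = (\<Prod>l\<leftarrow>ls. [:-l, 1:])"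
    using real_sym_char_poly_split[OF M sym] by blast
  define L where "L = rev (sort ls)"
  have PL: "length L = dim_row M \<and> sorted_wrt (\<ge>) L \<and> char_poly M = (\<Prod>l\<leftarrow>L. [:-l, 1:])"
  proof (intro conjI)
    show "length L = dim_row M" using ls M unfolding L_def by simp
    show "sorted_wrt (\<ge>) L" unfolding L_def sorted_wrt_rev by simp
    show "char_poly M = (\<Prod>l\<leftarrow>L. [:-l, 1:])" unfolding ls(2) L_def
      by (rule prod_list_mset_eq) simp
  qed
  have uniq: "L' = L" if "length L' = dim_row M \<and> sorted_wrt (\<ge>) L' \<and> char_poly M = (\<Prod>l\<leftarrow>L'. [:-l, 1:])" for L'
  proof -
    have "mset L' = mset ls" using that ls(2) lin_prod_mset by metis
    moreover have "sorted (rev L')" using that by (simp add: sorted_wrt_rev)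
    ultimately have "sort ls = rev L'" by (intro properties_for_sort) simp_all
    then show ?thesis unfolding L_def by simp
  qed
  have "eigenvalues_desc M = L" unfolding eigenvalues_desc_def
    by (rule the_equality) (use PL uniq in blast)+
  then show ?thesis using PL M by simp
qed

definition lagr :: "nat \<Rightarrow> nat \<Rightarrow> real poly" where
  "lagr m l = Polynomial.smult (1 / (\<Prod>j\<in>{..m}-{l}. (real l - real j))) (\<Prod>j\<in>{..m}-{l}. [:-real j, 1:])"

lemma poly_lagr:
  assumes "i \<le> m" "l \<le> m"
  shows "poly (lagr m l) (real i) = (if i = l then 1 else 0)"
proof (cases "i = l")
  case True
  have "(\<Prod>j\<in>{..m}-{l}. (real l - real j)) \<noteq> 0" by (simp add: prod_zero_iff)
  then show ?thesis using True unfolding lagr_def by (simp add: poly_prod)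
next
  case False
  then have "i \<in> {..m}-{l}" using assms by simp
  then have "(\<Prod>j\<in>{..m}-{l}. real i - real j) = 0" by (intro prod_zero) auto
  then show ?thesis using False unfolding lagr_def by (simp add: poly_prod)
qed

lemma degree_lagr: "l \<le> m \<Longrightarrow> degree (lagr m l) \<le> m"
proof -
  assume l: "l \<le> m"
  have "degree (\<Prod>j\<in>{..m}-{l}. [:-real j, 1:]) \<le> sum (degree \<circ> (\<lambda>j. [:-real j, 1:])) ({..m}-{l})"
    by (rule degree_prod_sum_le) simp
  also have "\<dots> = card ({..m}-{l})" by simp
  also have "\<dots> = m" using l by simp
  finally show ?thesis unfolding lagr_def using degree_smult_le order_trans by blast
qed

lemma lagrange:
  fixes g :: "real poly"
  assumes "degree g \<le> m"
  shows "g = (\<Sum>l\<le>m. Polynomial.smult (poly g (real l)) (lagr m l))"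
proof (rule ccontr)
  define h where "h = g - (\<Sum>l\<le>m. Polynomial.smult (poly g (real l)) (lagr m l))"
  assume "g \<noteq> (\<Sum>l\<le>m. Polynomial.smult (poly g (real l)) (lagr m l))"
  then have h0: "h \<noteq> 0" unfolding h_def by simp
  have "degree (\<Sum>l\<le>m. Polynomial.smult (poly g (real l)) (lagr m l)) \<le> m"
    by (rule degree_sum_le) (auto intro!: degree_lagr)
  then have dh: "degree h \<le> m" unfolding h_def using assms degree_diff_le by blast
  have roots: "poly h (real i) = 0" if "i \<le> m" for i
  proof -
    have "(\<Sum>l\<le>m. poly g (real l) * poly (lagr m l) (real i)) = (\<Sum>l\<le>m. if l = i then poly g (real l) else 0)"
      by (intro sum.cong refl) (use that in \<open>auto simp: poly_lagr\<close>)
    also have "\<dots> = poly g (real i)" using that by simp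
    finally show ?thesis unfolding h_def by (simp add: poly_sum)
  qed
  have "real ` {..m} \<subseteq> {x. poly h x = 0}" using roots by auto
  then have "card (real ` {..m}) \<le> card {x. poly h x = 0}"
    by (intro card_mono poly_roots_finite h0)
  also have "\<dots> \<le> degree h" by (rule card_poly_roots_bound[OF h0])
  finally have "Suc m \<le> m" using dh by (simp add: card_image)
  then show False by simp
qed

lemma coeff_lagrange:
  fixes g :: "real poly"
  assumes "degree g \<le> m"
  shows "coeff g k = (\<Sum>l\<le>m. poly g (real l) * coeff (lagr m l) k)"
  by (subst lagrange[OF assms]) (simp add: coeff_sum)



lemma poly_fun_cong: "(\<And>x. f x = g x) \<Longrightarrow> poly_fun n d g \<Longrightarrow> poly_fun n d f"
proof -
  assume "\<And>x. f x = g x" "poly_fun n d g"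
  moreover have "f = g" using \<open>\<And>x. f x = g x\<close> by (rule ext)
  ultimately show ?thesis by simp
qed

lemma jac_carrier: "jacobian n m p x \<in> carrier_mat m n"
  unfolding jacobian_def by simp

lemma jac_entry: "j < m \<Longrightarrow> i < n \<Longrightarrow> jacobian n m p x $$ (j, i) = deriv (\<lambda>t. p j (x(i := t))) (x i)"
  unfolding jacobian_def by simp

abbreviation JJ :: "nat \<Rightarrow> nat \<Rightarrow> (nat \<Rightarrow> (nat \<Rightarrow> real) \<Rightarrow> real) \<Rightarrow> (nat \<Rightarrow> real) \<Rightarrow> real mat" where
  "JJ n m p x \<equiv> jacobian n m p x * transpose_mat (jacobian n m p x)"

lemma JJ_carrier: "JJ n m p x \<in> carrier_mat m m"
  using jac_carrier[of n m p x] by auto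

lemma JJ_entry:
  assumes "j < m" "k < m"
  shows "JJ n m p x $$ (j, k) = (\<Sum>i=0..<n. deriv (\<lambda>t. p j (x(i := t))) (x i) * deriv (\<lambda>t. p k (x(i := t))) (x i))"
  using assms jac_carrier[of n m p x] by (auto simp: scalar_prod_def jac_entry intro!: sum.cong)

lemma JJ_sym: "j < m \<Longrightarrow> k < m \<Longrightarrow> JJ n m p x $$ (j, k) = JJ n m p x $$ (k, j)"
  by (simp add: JJ_entry mult.commute)

lemma JJ_poly:
  assumes "poly_map n m d p" "j < m" "k < m"
  shows "poly_fun n (d + d) (\<lambda>x. JJ n m p x $$ (j, k))"
proof (rule poly_fun_cong[OF JJ_entry[OF assms(2,3)]])
  show "poly_fun n (d + d) (\<lambda>x. \<Sum>i=0..<n. deriv (\<lambda>t. p j (x(i := t))) (x i) * deriv (\<lambda>t. p k (x(i := t))) (x i))"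
    using assms unfolding poly_map_def
    by (intro poly_fun_sum poly_fun_mult poly_fun_deriv) auto
qed

definition DT :: "nat \<Rightarrow> nat \<Rightarrow> (nat \<Rightarrow> (nat \<Rightarrow> real) \<Rightarrow> real) \<Rightarrow> real \<Rightarrow> (nat \<Rightarrow> real) \<Rightarrow> real" where
  "DT n m p y x = det (- char_matrix (JJ n m p x) y)"

lemma DT_poly:
  assumes "poly_map n m d p"
  shows "poly_fun n (m * (d + d)) (DT n m p y)"
proof -
  have entry: "(- char_matrix (JJ n m p x) y) $$ (i, j) = - (JJ n m p x $$ (i, j) + (- y) * (if i = j then 1 else 0))"
    if "i < m" "j < m" for i j x
  proof -
    have d: "dim_row (JJ n m p x) = m" "dim_col (JJ n m p x) = m" using JJ_carrier[of n m p x] by auto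
    show ?thesis using that unfolding char_matrix_def d(1)
      by (simp add: index_add_mat index_smult_mat index_one_mat d)
  qed
  have car: "- char_matrix (JJ n m p x) y \<in> carrier_mat m m" for x
    using JJ_carrier[of n m p x] by simp
  have eq: "DT n m p y x = (\<Sum>\<pi>\<in>{\<pi>. \<pi> permutes {0..<m}}. signof \<pi> *
      (\<Prod>i=0..<m. - (JJ n m p x $$ (i, \<pi> i) + (- y) * (if i = \<pi> i then 1 else 0))))" for x
    unfolding DT_def det_def'[OF car]
    by (intro sum.cong refl arg_cong2[where f=times] prod.cong) (auto simp: entry permutes_in_image)
  have pe: "poly_fun n (d + d) (\<lambda>x. - (JJ n m p x $$ (i, j) + (- y) * (if i = j then 1 else 0)))"
    if "i < m" "j < m" for i j
    by (intro poly_fun_uminus poly_fun_add JJ_poly[OF assms that] poly_fun_const)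
  show ?thesis
  proof (rule poly_fun_cong[OF eq], intro poly_fun_sum poly_fun_scale)
    show "finite {\<pi>. \<pi> permutes {0..<m}}" by (rule finite_permutations) simp
    fix \<pi> assume "\<pi> \<in> {\<pi>. \<pi> permutes {0..<m}}"
    then have \<pi>: "\<pi> permutes {0..<m}" by simp
    have pim: "\<pi> i < m" if "i < m" for i using permutes_in_image[OF \<pi>, of i] that by simp
    have "poly_fun n (card {0..<m} * (d + d)) (\<lambda>x. \<Prod>i=0..<m. - (JJ n m p x $$ (i, \<pi> i) + (- y) * (if i = \<pi> i then 1 else 0)))"
      by (rule poly_fun_prod, simp, rule pe) (auto simp: pim)
    then show "poly_fun n (m * (d + d)) (\<lambda>x. \<Prod>i=0..<m. - (JJ n m p x $$ (i, \<pi> i) + (- y) * (if i = \<pi> i then 1 else 0)))"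
      by simp
  qed
qed

lemma DT_char_poly: "poly (char_poly (JJ n m p x)) y = DT n m p y x"
  unfolding DT_def by (rule char_poly_matrix[OF JJ_carrier])

lemma degree_lin_prod: "degree (\<Prod>\<mu>\<leftarrow>\<mu>s. [:-\<mu>, 1:] :: real poly) \<le> length \<mu>s"
proof (induction \<mu>s)
  case (Cons \<mu> \<mu>s)
  have "degree ([:-\<mu>, 1:] * (\<Prod>\<mu>\<leftarrow>\<mu>s. [:-\<mu>, 1:] :: real poly)) \<le> degree [:-\<mu>, 1:] + degree (\<Prod>\<mu>\<leftarrow>\<mu>s. [:-\<mu>, 1:] :: real poly)"
    by (rule degree_mult_le)
  then show ?case using Cons by simp
qed simp

definition QQ :: "nat \<Rightarrow> nat \<Rightarrow> (nat \<Rightarrow> (nat \<Rightarrow> real) \<Rightarrow> real) \<Rightarrow> real \<Rightarrow> nat \<Rightarrow> (nat \<Rightarrow> real) \<Rightarrow> real" where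
  "QQ n m p t k x = (\<Sum>l\<le>m. coeff (lagr m l) k * DT n m p (real l + t) x)"

lemma QQ_poly: "poly_map n m d p \<Longrightarrow> poly_fun n (m * (d + d)) (QQ n m p t k)"
  unfolding QQ_def by (intro poly_fun_sum poly_fun_scale DT_poly) auto

abbreviation GG where
  "GG n m p t x \<equiv> (\<Prod>\<mu>\<leftarrow>map (\<lambda>l. l - t) (eigenvalues_desc (JJ n m p x)). [:-\<mu>, 1:] :: real poly)"

lemma eig_JJ: "length (eigenvalues_desc (JJ n m p x)) = m \<and> sorted_wrt (\<ge>) (eigenvalues_desc (JJ n m p x)) \<and>
         char_poly (JJ n m p x) = (\<Prod>l\<leftarrow>eigenvalues_desc (JJ n m p x). [:-l, 1:])"
  by (rule eigenvalues_desc_sym[OF JJ_carrier JJ_sym])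

lemma coeff_GG: "coeff (GG n m p t x) k = QQ n m p t k x"
proof -
  let ?ls = "eigenvalues_desc (JJ n m p x)"
  have deg: "degree (GG n m p t x) \<le> m"
    using degree_lin_prod[of "map (\<lambda>l. l - t) ?ls"] eig_JJ[of n m p x] by simp
  have ev: "poly (GG n m p t x) y = DT n m p (y + t) x" for y
  proof -
    have "poly (GG n m p t x) y = (\<Prod>l\<leftarrow>?ls. (y + t) - l)"
      unfolding poly_lin_prod by (simp add: o_def algebra_simps)
    also have "\<dots> = poly (char_poly (JJ n m p x)) (y + t)"
      using eig_JJ[of n m p x] by (simp add: poly_lin_prod)
    finally show ?thesis by (simp add: DT_char_poly)
  qed
  show ?thesis unfolding coeff_lagrange[OF deg, of k] QQ_def ev by (simp add: mult.commute)
qed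

lemma sqrt_le_iff_sq: "(L::real) \<ge> 0 \<Longrightarrow> sqrt a \<le> L \<longleftrightarrow> a \<le> L\<^sup>2"
proof (cases "a \<ge> 0")
  case True
  assume "L \<ge> 0" then show ?thesis using True real_sqrt_le_iff' by blast
next
  case False
  assume L: "L \<ge> 0"
  have "sqrt a < 0" using False by simp
  moreover have "a < 0" using False by simp
  ultimately show ?thesis using L by (smt (verit) zero_le_power2)
qed

lemma sorted_desc_count:
  fixes ls :: "real list"
  assumes s: "sorted_wrt (\<ge>) ls" and i: "i < length ls"
  shows "ls ! i \<le> t \<longleftrightarrow> length (filter (\<lambda>l. l > t) ls) \<le> i"
proof
  assume le: "ls ! i \<le> t"
  have "{j. j < length ls \<and> ls ! j > t} \<subseteq> {..<i}"
  proof
    fix j assume j: "j \<in> {j. j < length ls \<and> ls ! j > t}"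
    show "j \<in> {..<i}"
    proof (rule ccontr)
      assume "j \<notin> {..<i}"
      then have "i \<le> j" by simp
      then have "ls ! j \<le> ls ! i" using s j
        by (cases "i = j") (auto simp: sorted_wrt_iff_nth_less)
      then show False using j le by simp
    qed
  qed
  then have "card {j. j < length ls \<and> ls ! j > t} \<le> card {..<i}" by (intro card_mono) auto
  then show "length (filter (\<lambda>l. l > t) ls) \<le> i" by (simp add: length_filter_conv_card)
next
  assume c: "length (filter (\<lambda>l. l > t) ls) \<le> i"
  show "ls ! i \<le> t"
  proof (rule ccontr)
    assume "\<not> ls ! i \<le> t"
    then have gt: "ls ! i > t" by simp
    have "{..i} \<subseteq> {j. j < length ls \<and> ls ! j > t}"
    proof
      fix j assume "j \<in> {..i}"
      then have j: "j \<le> i" by simp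
      then have "ls ! i \<le> ls ! j" using s i
        by (cases "i = j") (auto simp: sorted_wrt_iff_nth_less)
      then show "j \<in> {j. j < length ls \<and> ls ! j > t}" using j i gt by simp
    qed
    then have "card {..i} \<le> card {j. j < length ls \<and> ls ! j > t}" by (intro card_mono) auto
    then have "Suc i \<le> length (filter (\<lambda>l. l > t) ls)" by (simp add: length_filter_conv_card)
    then show False using c by simp
  qed
qed

lemma sv_condition:
  assumes i: "i < m" and L: "L \<ge> 0"
  shows "singular_value (jacobian n m p x) i \<le> L \<longleftrightarrow> \<not> (\<exists>f. schain (\<lambda>k. QQ n m p (L\<^sup>2) k x) (Suc i) f)"
proof -
  let ?ls = "eigenvalues_desc (JJ n m p x)"
  have E: "length ?ls = m" "sorted_wrt (\<ge>) ?ls" using eig_JJ[of n m p x] by auto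
  have "singular_value (jacobian n m p x) i \<le> L \<longleftrightarrow> ?ls ! i \<le> L\<^sup>2"
    unfolding singular_value_def using sqrt_le_iff_sq[OF L] by simp
  also have "\<dots> \<longleftrightarrow> length (filter (\<lambda>l. l > L\<^sup>2) ?ls) \<le> i"
    using sorted_desc_count[OF E(2)] i E(1) by simp
  also have "length (filter (\<lambda>l. l > L\<^sup>2) ?ls) = length (filter (\<lambda>\<mu>. \<mu> > 0) (map (\<lambda>l. l - L\<^sup>2) ?ls))"
    by (simp add: filter_map o_def)
  also have "\<dots> = svar (coeff (GG n m p (L\<^sup>2) x))"
    by (rule descartes_real_rooted[symmetric])
  also have "svar (coeff (GG n m p (L\<^sup>2) x)) \<le> i \<longleftrightarrow> \<not> (\<exists>f. schain (coeff (GG n m p (L\<^sup>2) x)) (Suc i) f)"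
    by (rule svar_le_iff[OF bnd_prod])
  also have "coeff (GG n m p (L\<^sup>2) x) = (\<lambda>k. QQ n m p (L\<^sup>2) k x)"
    by (rule ext) (rule coeff_GG)
  finally show ?thesis .
qed

lemma QQ_high: "m < k \<Longrightarrow> QQ n m p t k x = 0"
proof -
  assume k: "m < k"
  let ?ls = "eigenvalues_desc (JJ n m p x)"
  have "degree (GG n m p t x) \<le> m"
    using degree_lin_prod[of "map (\<lambda>l. l - t) ?ls"] eig_JJ[of n m p x] by simp
  then have "coeff (GG n m p t x) k = 0" using k by (simp add: coeff_eq_0)
  then show ?thesis by (simp only: coeff_GG)
qed


lemma C_char:
  assumes "\<forall>i<m. \<Lambda> i \<ge> 0"
  shows "C_Lambda n m \<Lambda> p = {x \<in> Rn n. \<forall>i<m. \<not> (\<exists>f. schain (\<lambda>k. QQ n m p ((\<Lambda> i)\<^sup>2) k x) (Suc i) f)}"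
  unfolding C_Lambda_def using sv_condition assms by blast

lemma closed_Rn: "closed (Rn n)"
proof -
  have "closed {x::nat\<Rightarrow>real. n \<le> i \<longrightarrow> x i = 0}" for i
  proof (cases "n \<le> i")
    case True
    have "closed {x::nat\<Rightarrow>real. x i = 0}"
      by (rule closed_Collect_eq) (auto intro: continuous_on_product_coordinates continuous_on_const)
    then show ?thesis using True by simp
  qed simp
  then have "closed {x::nat\<Rightarrow>real. \<forall>i. n \<le> i \<longrightarrow> x i = 0}" by (rule closed_Collect_all)
  then show ?thesis unfolding Rn_def by simp
qed

lemma open_schain:
  assumes "\<And>k. continuous_on UNIV (c k)"
  shows "open {x. schain (\<lambda>k. c k x) r f}"
proof -
  have eq: "{x. schain (\<lambda>k. c k x) r f} = (\<Inter>k\<in>{..<r}. {x. f k < f (Suc k) \<and> c (f k) x * c (f (Suc k)) x < 0})"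
    unfolding schain_def by auto
  have "open {x. f k < f (Suc k) \<and> c (f k) x * c (f (Suc k)) x < 0}" for k
  proof (cases "f k < f (Suc k)")
    case True
    have "open {x. c (f k) x * c (f (Suc k)) x < 0}"
      by (rule open_Collect_less) (auto intro: continuous_on_mult assms continuous_on_const)
    then show ?thesis using True by simp
  qed simp
  then show ?thesis unfolding eq by (intro open_INT) auto
qed

lemma C_closed:
  assumes "poly_map n m d p" "\<forall>i<m. \<Lambda> i \<ge> 0"
  shows "closed (C_Lambda n m \<Lambda> p)"
proof -
  have eq: "C_Lambda n m \<Lambda> p = Rn n \<inter> (\<Inter>i\<in>{..<m}. \<Inter>f. {x. \<not> schain (\<lambda>k. QQ n m p ((\<Lambda> i)\<^sup>2) k x) (Suc i) f})"
    unfolding C_char[OF assms(2)] by auto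
  have cont: "continuous_on UNIV (QQ n m p t k)" for t k
    by (rule poly_fun_continuous[OF QQ_poly[OF assms(1)]])
  show ?thesis unfolding eq
    by (intro closed_Int closed_Rn closed_INT ballI closed_Collect_neg open_schain cont)
qed

lemma idx_lemma:
  assumes "i < m" "k \<le> m"
  shows "i * Suc m + k < m * Suc m" "(i * Suc m + k) div Suc m = i" "(i * Suc m + k) mod Suc m = k"
proof -
  have "i * Suc m + k < Suc i * Suc m" using assms by simp
  also have "\<dots> \<le> m * Suc m" using assms by (intro mult_right_mono) auto
  finally show "i * Suc m + k < m * Suc m" .
  have "(i * Suc m + k) mod Suc m = k mod Suc m" by (rule mod_mult_self3)
  also have "k mod Suc m = k" using assms by simp
  finally show "(i * Suc m + k) mod Suc m = k" .
  have "(i * Suc m + k) div Suc m = i + k div Suc m" by (rule div_mult_self3) simp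
  also have "k div Suc m = 0" using assms by simp
  finally show "(i * Suc m + k) div Suc m = i" by simp
qed

lemma C_semialg:
  assumes pm: "poly_map n m d p" and L: "\<forall>i<m. \<Lambda> i \<ge> 0"
  shows "semialg_diagram n (3 ^ (m * Suc m) * Suc (m * Suc m)) (m * (d + d)) (C_Lambda n m \<Lambda> p)"
proof -
  define N where "N = m * Suc m"
  define Qj where "Qj j = QQ n m p ((\<Lambda> (j div Suc m))\<^sup>2) (j mod Suc m)" for j
  define PL where "PL = List.n_lists N [-1, 0, 1::real]"
  define good where "good \<sigma> \<longleftrightarrow> (\<forall>i<m. \<not> (\<exists>f. schain (\<lambda>k. if k \<le> m then \<sigma> ! (i * Suc m + k) else 0) (Suc i) f))"
    for \<sigma> :: "real list"
  define q where "q a j = (if j < N then Qj j else (\<lambda>_. 1))" for a j :: nat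
  define sg where "sg a j = (if j < N then PL ! a ! j else if good (PL ! a) then 1 else 0)" for a j
  have lenPL: "length PL = 3 ^ N" unfolding PL_def by (simp add: length_n_lists numeral_3_eq_3)
  have setPL: "\<sigma> \<in> set PL \<longleftrightarrow> length \<sigma> = N \<and> set \<sigma> \<subseteq> {-1, 0, 1}" for \<sigma>
    unfolding PL_def by (auto simp: set_n_lists)
  have match: "schain (\<lambda>k. QQ n m p ((\<Lambda> i)\<^sup>2) k x) r f = schain (\<lambda>k. if k \<le> m then \<sigma> ! (i * Suc m + k) else 0) r f"
    if \<sigma>: "\<forall>j<N. sgn (Qj j x) = \<sigma> ! j" and i: "i < m" for \<sigma> x i r f
  proof (rule svar_cong_sign)
    fix k
    show "sgn (QQ n m p ((\<Lambda> i)\<^sup>2) k x) = sgn (if k \<le> m then \<sigma> ! (i * Suc m + k) else 0)"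
    proof (cases "k \<le> m")
      case True
      note ix = idx_lemma[OF i True]
      have "\<sigma> ! (i * Suc m + k) = sgn (Qj (i * Suc m + k) x)" using \<sigma> ix(1) unfolding N_def by simp
      also have "\<dots> = sgn (QQ n m p ((\<Lambda> i)\<^sup>2) k x)" unfolding Qj_def ix(2,3) ..
      finally show ?thesis using True by simp
    next
      case False
      then show ?thesis using QQ_high[of m k n p "(\<Lambda> i)\<^sup>2" x] by simp
    qed
  qed
  show ?thesis
    unfolding semialg_diagram_def
  proof (intro exI[of _ "length PL"] exI[of _ "\<lambda>_. Suc N"] exI[of _ q] exI[of _ sg] conjI allI impI)
    fix a j assume a: "a < length PL" and j: "j < Suc N"
    show "poly_fun n (m * (d + d)) (q a j)"
      unfolding q_def Qj_def using QQ_poly[OF pm] poly_fun_const by simp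
    have "PL ! a \<in> set PL" using a by simp
    then have "length (PL ! a) = N" "set (PL ! a) \<subseteq> {-1, 0, 1}" using setPL by auto
    then show "sg a j \<in> {0, 1, -1}" unfolding sg_def by (auto dest: nth_mem)
  next
    have "(0::nat) < 3 ^ N" by simp
    then have "0 \<in> {..<length PL}" using lenPL by simp
    then have "{..<length PL} \<noteq> {}" by blast
    then have "(\<lambda>_. Suc N) ` {..<length PL} = {Suc N}" by auto
    then show "length PL * Max ((\<lambda>_. Suc N) ` {..<length PL}) \<le> 3 ^ (m * Suc m) * Suc (m * Suc m)"
      using lenPL unfolding N_def by simp
  next
    show "C_Lambda n m \<Lambda> p = (\<Union>a<length PL. {x \<in> Rn n. \<forall>j<Suc N. sgn (q a j x) = sg a j})"
    proof
      show "C_Lambda n m \<Lambda> p \<subseteq> (\<Union>a<length PL. {x \<in> Rn n. \<forall>j<Suc N. sgn (q a j x) = sg a j})"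
      proof
        fix x assume x: "x \<in> C_Lambda n m \<Lambda> p"
        then have xR: "x \<in> Rn n" and xc: "\<forall>i<m. \<not> (\<exists>f. schain (\<lambda>k. QQ n m p ((\<Lambda> i)\<^sup>2) k x) (Suc i) f)"
          unfolding C_char[OF L] by auto
        define \<sigma> where "\<sigma> = map (\<lambda>j. sgn (Qj j x)) [0..<N]"
        have \<sigma>j: "\<forall>j<N. sgn (Qj j x) = \<sigma> ! j" unfolding \<sigma>_def by simp
        have "set \<sigma> \<subseteq> {-1, 0, 1}" unfolding \<sigma>_def by (auto simp: sgn_real_def)
        then have "\<sigma> \<in> set PL" using setPL unfolding \<sigma>_def by simp
        then obtain a where a: "a < length PL" "PL ! a = \<sigma>" by (metis in_set_conv_nth)
        have g: "good \<sigma>" unfolding good_def using xc match[OF \<sigma>j] by simp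
        have "\<forall>j<Suc N. sgn (q a j x) = sg a j"
        proof (intro allI impI)
          fix j assume "j < Suc N"
          then show "sgn (q a j x) = sg a j"
            using \<sigma>j g a(2) unfolding q_def sg_def by (cases "j < N") auto
        qed
        then show "x \<in> (\<Union>a<length PL. {x \<in> Rn n. \<forall>j<Suc N. sgn (q a j x) = sg a j})"
          using a(1) xR by blast
      qed
    next
      show "(\<Union>a<length PL. {x \<in> Rn n. \<forall>j<Suc N. sgn (q a j x) = sg a j}) \<subseteq> C_Lambda n m \<Lambda> p"
      proof
        fix x assume "x \<in> (\<Union>a<length PL. {x \<in> Rn n. \<forall>j<Suc N. sgn (q a j x) = sg a j})"
        then obtain a where a: "a < length PL" and xR: "x \<in> Rn n"
          and xs: "\<forall>j<Suc N. sgn (q a j x) = sg a j" by blast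
        have \<sigma>j: "\<forall>j<N. sgn (Qj j x) = PL ! a ! j"
        proof (intro allI impI)
          fix j assume j: "j < N"
          then have "sgn (q a j x) = sg a j" using xs by simp
          then show "sgn (Qj j x) = PL ! a ! j" using j unfolding q_def sg_def by simp
        qed
        have "sgn (q a N x) = sg a N" using xs by simp
        then have g: "good (PL ! a)" unfolding q_def sg_def by (auto split: if_splits)
        have "\<forall>i<m. \<not> (\<exists>f. schain (\<lambda>k. QQ n m p ((\<Lambda> i)\<^sup>2) k x) (Suc i) f)"
          using g match[OF \<sigma>j] unfolding good_def by simp
        then show "x \<in> C_Lambda n m \<Lambda> p" unfolding C_char[OF L] using xR by simp
      qed
    qed
  qed
qed

theorem proposition3p16:
  fixes d m :: nat
  shows "\<exists>c' d' :: nat. \<forall>n \<ge> m. \<forall>p \<Lambda>.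
           poly_map n m d p \<longrightarrow> (\<forall>i<m. \<Lambda> i \<ge> 0) \<longrightarrow>
           closed (C_Lambda n m \<Lambda> p) \<and> semialg_diagram n c' d' (C_Lambda n m \<Lambda> p)"
proof (rule exI[of _ "3 ^ (m * Suc m) * Suc (m * Suc m)"], rule exI[of _ "m * (d + d)"], intro allI impI)
  fix n p and \<Lambda> :: "nat \<Rightarrow> real"
  assume "poly_map n m d p" "\<forall>i<m. \<Lambda> i \<ge> 0"
  then show "closed (C_Lambda n m \<Lambda> p) \<and>
    semialg_diagram n (3 ^ (m * Suc m) * Suc (m * Suc m)) (m * (d + d)) (C_Lambda n m \<Lambda> p)"
    using C_closed C_semialg by blast
qed


end
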